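(* For each $n$ let $0<p_n,q_n\le 1$ with $\frac{p_nq_n^2n}{\log n}\to\infty$ as $n\to\infty$, and let $\alpha^{(0)}$ be an initial configuration of $n$ cards. For $k\ge 1$ let $\alpha^{(k)}_1$ denote the size of the pile newly formed in the $k$-th move of $\mathscr{B}(n,p_n,q_n)$ (possibly $0$). Put $D=\lceil 14\log n/(p_nq_n)\rceil$ and $M=\lceil n^2/p_n\rceil$. Then \[ \max_{k\in[D+1,D+M]}\frac{|\alpha^{(k)}_1-p_nq_nn|}{p_nq_nn}\to 0\quad\text{in probability as } n\to\infty. \]
   Context: $\mathscr{B}(n,p,q)$ ($0<p,q\le 1$) is $p$-random $q$-proportion Bulgarian solitaire on $n$ identical cards distributed in piles. In one move, from each pile of size $h$ the top $\lceil qh\rceil$ cards are candidates; each candidate card is picked with probability $p$, independently of all other candidates; the picked cards are removed and together form one new pile. *)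

theory Defs
  imports "HOL-Probability.Probability_Mass_Function"
begin

text \<open>A configuration of cards is a list of pile sizes (all positive); the order of
the piles is irrelevant.\<close>

fun bs_draws :: "real \<Rightarrow> real \<Rightarrow> nat list \<Rightarrow> nat list pmf" where
  "bs_draws p q [] = return_pmf []"
| "bs_draws p q (h # hs) =
     bind_pmf (binomial_pmf (nat \<lceil>q * real h\<rceil>) p) (\<lambda>x.
     bind_pmf (bs_draws p q hs) (\<lambda>xs. return_pmf (x # xs)))"

definition bs_step :: "real \<Rightarrow> real \<Rightarrow> nat list \<Rightarrow> (nat list \<times> nat) pmf" where
  "bs_step p q \<alpha> = map_pmf (\<lambda>xs.
      let new = sum_list xs;
          rest = filter (\<lambda>h. 0 < h) (map2 (-) \<alpha> xs)
      in ((if 0 < new then new # rest else rest), new)) (bs_draws p q \<alpha>)"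

fun bs_newpiles :: "real \<Rightarrow> real \<Rightarrow> nat list \<Rightarrow> nat \<Rightarrow> nat list pmf" where
  "bs_newpiles p q \<alpha> 0 = return_pmf []"
| "bs_newpiles p q \<alpha> (Suc m) =
     bind_pmf (bs_step p q \<alpha>) (\<lambda>(\<alpha>', s).
     bind_pmf (bs_newpiles p q \<alpha>' m) (\<lambda>ss. return_pmf (s # ss)))"

end

theory Submission imports Defs begin

definition nxt :: "nat list \<Rightarrow> nat list \<Rightarrow> nat list" where
  "nxt g xs = sum_list xs # map2 (-) g xs"

fun np2 :: "real \<Rightarrow> real \<Rightarrow> nat list \<Rightarrow> nat \<Rightarrow> nat list pmf" where
  "np2 p q g 0 = return_pmf []"
| "np2 p q g (Suc m) = bind_pmf (bs_draws p q g) (\<lambda>xs.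
     bind_pmf (np2 p q (nxt g xs) m) (\<lambda>ss. return_pmf (sum_list xs # ss)))"

fun cfg :: "real \<Rightarrow> real \<Rightarrow> nat list \<Rightarrow> nat \<Rightarrow> nat list pmf" where
  "cfg p q g 0 = return_pmf g"
| "cfg p q g (Suc j) = bind_pmf (cfg p q g j) (\<lambda>g'. map_pmf (nxt g') (bs_draws p q g'))"

lemma draws_cons: "bs_draws p q (h # hs) =
   bind_pmf (binomial_pmf (nat \<lceil>q * real h\<rceil>) p) (\<lambda>x. map_pmf ((#) x) (bs_draws p q hs))"
  by (simp add: map_pmf_def)

declare bs_draws.simps(2)[simp del]

lemma A0:
  assumes p: "p \<in> {0..1}"
  shows "map_pmf (\<lambda>xs. (filter (\<lambda>h. 0 < h) (map2 (-) g xs), sum_list xs)) (bs_draws p q g) =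
         map_pmf (\<lambda>xs. (filter (\<lambda>h. 0 < h) (map2 (-) (filter (\<lambda>h. 0 < h) g) xs), sum_list xs))
            (bs_draws p q (filter (\<lambda>h. 0 < h) g))"
proof (induction g)
  case Nil
  then show ?case by simp
next
  case (Cons h g)
  let ?F = "\<lambda>g xs. (filter (\<lambda>h. 0 < h) (map2 (-) g xs), sum_list (xs::nat list))"
  show ?case
  proof (cases "h = 0")
    case True
    have "map_pmf (?F (h#g)) (bs_draws p q (h#g)) = map_pmf (?F g) (bs_draws p q g)"
      using True p by (simp add: draws_cons binomial_pmf_0 map_pmf_comp bind_return_pmf)
    then show ?thesis using True Cons.IH by simp
  next
    case False
    have filt: "filter (\<lambda>h. 0 < h) (h#g) = h # filter (\<lambda>h. 0 < h) g" using False by simp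
    define G where "G = (\<lambda>x (A::nat list, s::nat). (if 0 < h - x then (h-x)#A else A, x + s))"
    have "map_pmf (?F (h#g)) (bs_draws p q (h#g)) =
       bind_pmf (binomial_pmf (nat \<lceil>q * real h\<rceil>) p) (\<lambda>x. map_pmf (G x) (map_pmf (?F g) (bs_draws p q g)))"
      unfolding draws_cons map_bind_pmf map_pmf_comp
      by (intro bind_pmf_cong refl map_pmf_cong) (simp add: G_def)
    also have "\<dots> = bind_pmf (binomial_pmf (nat \<lceil>q * real h\<rceil>) p) (\<lambda>x. map_pmf (G x) 
        (map_pmf (?F (filter (\<lambda>h. 0 < h) g)) (bs_draws p q (filter (\<lambda>h. 0 < h) g))))"
      by (subst Cons.IH) (rule refl)
    also have "\<dots> = map_pmf (?F (filter (\<lambda>h. 0 < h) (h#g))) (bs_draws p q (filter (\<lambda>h. 0 < h) (h#g)))"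
      using False unfolding filt draws_cons map_bind_pmf map_pmf_comp
      by (intro bind_pmf_cong refl map_pmf_cong) (simp add: G_def)
    finally show ?thesis .
  qed
qed

lemma A1:
  assumes p: "p \<in> {0..1}"
  shows "bs_step p q (filter (\<lambda>h. 0 < h) g) =
     map_pmf (\<lambda>xs. (filter (\<lambda>h. 0 < h) (nxt g xs), sum_list xs)) (bs_draws p q g)"
proof -
  define H where "H = (\<lambda>(A::nat list, s::nat). (if 0 < s then s#A else A, s))"
  have fe: "\<And>g'. (\<lambda>xs. let new = sum_list xs; rest = filter (\<lambda>h. 0<h) (map2 (-) (g'::nat list) xs) in ((if 0 < new then new # rest else rest), new)) = 
     (\<lambda>xs. H (filter (\<lambda>h. 0<h) (map2 (-) g' xs), sum_list (xs::nat list)))"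
    by (rule ext) (simp add: Let_def H_def)
  have fe2: "(\<lambda>xs. H (filter (\<lambda>h. 0<h) (map2 (-) g xs), sum_list (xs::nat list))) = 
     (\<lambda>xs. (filter (\<lambda>h. 0 < h) (nxt g xs), sum_list xs))"
    by (rule ext) (simp add: H_def nxt_def)
  have "bs_step p q (filter (\<lambda>h. 0 < h) g) = map_pmf H (map_pmf (\<lambda>xs. (filter (\<lambda>h. 0 < h) (map2 (-) (filter (\<lambda>h. 0 < h) g) xs), sum_list xs))
            (bs_draws p q (filter (\<lambda>h. 0 < h) g)))"
    unfolding bs_step_def map_pmf_comp fe ..
  also have "\<dots> = map_pmf H (map_pmf (\<lambda>xs. (filter (\<lambda>h. 0 < h) (map2 (-) g xs), sum_list xs)) (bs_draws p q g))"
    by (subst A0[OF p]) (rule refl)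
  also have "\<dots> = map_pmf (\<lambda>xs. (filter (\<lambda>h. 0 < h) (nxt g xs), sum_list xs)) (bs_draws p q g)"
    unfolding map_pmf_comp fe2 ..
  finally show ?thesis .
qed

lemma A2:
  assumes p: "p \<in> {0..1}"
  shows "bs_newpiles p q (filter (\<lambda>h. 0 < h) g) m = np2 p q g m"
proof (induction m arbitrary: g)
  case 0
  then show ?case by simp
next
  case (Suc m)
  show ?case
    by (simp add: A1[OF p] bind_map_pmf Suc.IH)
qed


lemma cfg_front: "cfg p q g (Suc j) = bind_pmf (bs_draws p q g) (\<lambda>xs. cfg p q (nxt g xs) j)"
proof (induction j arbitrary: g)
  case 0
  then show ?case by (simp add: map_pmf_def bind_return_pmf)
next
  case (Suc j)
  have "cfg p q g (Suc (Suc j)) = bind_pmf (cfg p q g (Suc j)) (\<lambda>g'. map_pmf (nxt g') (bs_draws p q g'))"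
    by (simp only: cfg.simps)
  also have "\<dots> = bind_pmf (bind_pmf (bs_draws p q g) (\<lambda>xs. cfg p q (nxt g xs) j)) (\<lambda>g'. map_pmf (nxt g') (bs_draws p q g'))"
    by (simp only: Suc.IH)
  also have "\<dots> = bind_pmf (bs_draws p q g) (\<lambda>xs. cfg p q (nxt g xs) (Suc j))"
    by (simp add: bind_assoc_pmf)
  finally show ?case .
qed

lemma marg: "j < m \<Longrightarrow> map_pmf (\<lambda>ss. ss ! j) (np2 p q g m) =
   bind_pmf (cfg p q g j) (\<lambda>g'. map_pmf sum_list (bs_draws p q g'))"
proof (induction j arbitrary: g m)
  case 0
  then obtain m' where m: "m = Suc m'" by (cases m) auto
  show ?case unfolding m
    by (simp add: map_bind_pmf bind_pmf_const) (simp add: map_pmf_def bind_return_pmf)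
next
  case (Suc j)
  then obtain m' where m: "m = Suc m'" and j: "j < m'" by (cases m) auto
  have "map_pmf (\<lambda>ss. ss ! Suc j) (np2 p q g m) =
     bind_pmf (bs_draws p q g) (\<lambda>xs. map_pmf (\<lambda>ss. ss ! j) (np2 p q (nxt g xs) m'))"
    unfolding m by (simp add: map_bind_pmf map_pmf_def[symmetric] map_pmf_comp)
  also have "\<dots> = bind_pmf (bs_draws p q g) (\<lambda>xs. bind_pmf (cfg p q (nxt g xs) j) (\<lambda>g'. map_pmf sum_list (bs_draws p q g')))"
    using Suc.IH[OF j] by simp
  also have "\<dots> = bind_pmf (cfg p q g (Suc j)) (\<lambda>g'. map_pmf sum_list (bs_draws p q g'))"
    unfolding cfg_front by (simp add: bind_assoc_pmf)
  finally show ?case .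
qed

lemma c_le: "0 \<le> q \<Longrightarrow> q \<le> 1 \<Longrightarrow> nat \<lceil>q * real h\<rceil> \<le> h"
proof -
  assume q: "0 \<le> q" "q \<le> 1"
  have "q * real h \<le> real h" using q by (simp add: mult_left_le_one_le)
  then have "\<lceil>q * real h\<rceil> \<le> int h" by (intro ceiling_le) simp
  then show ?thesis by (simp add: nat_le_iff)
qed

lemma set_binom: "p \<in> {0..1} \<Longrightarrow> x \<in> set_pmf (binomial_pmf n p) \<Longrightarrow> x \<le> n"
  by (auto simp: set_pmf_binomial_eq split: if_splits)

lemma draws_le: "p \<in> {0..1} \<Longrightarrow> 0 \<le> q \<Longrightarrow> q \<le> 1 \<Longrightarrow> xs \<in> set_pmf (bs_draws p q g) \<Longrightarrow> list_all2 (\<le>) xs g"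
proof (induction g arbitrary: xs)
  case Nil
  then show ?case by simp
next
  case (Cons h g)
  from Cons.prems obtain x xs' where xs: "xs = x # xs'" and x: "x \<in> set_pmf (binomial_pmf (nat \<lceil>q * real h\<rceil>) p)"
    and xs': "xs' \<in> set_pmf (bs_draws p q g)"
    by (auto simp: draws_cons)
  have "x \<le> h" using order.trans[OF set_binom[OF Cons.prems(1) x] c_le[OF Cons.prems(2,3), of h]] .
  then show ?case using Cons.IH[OF Cons.prems(1-3) xs'] xs by simp
qed

lemma sum_nxt: "list_all2 (\<le>) xs g \<Longrightarrow> sum_list (nxt g xs) = sum_list g"
proof -
  assume "list_all2 (\<le>) xs g"
  then have "sum_list xs + sum_list (map2 (-) g xs) = sum_list g"
    by (induction rule: list_all2_induct) auto
  then show ?thesis by (simp add: nxt_def)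
qed

lemma cfg_sum: "p \<in> {0..1} \<Longrightarrow> 0 \<le> q \<Longrightarrow> q \<le> 1 \<Longrightarrow> g' \<in> set_pmf (cfg p q g j) \<Longrightarrow> sum_list g' = sum_list g"
proof (induction j arbitrary: g')
  case 0
  then show ?case by simp
next
  case (Suc j)
  then obtain g1 xs where g1: "g1 \<in> set_pmf (cfg p q g j)" and xs: "xs \<in> set_pmf (bs_draws p q g1)"
    and g': "g' = nxt g1 xs" by auto
  show ?case using Suc.IH[OF Suc.prems(1-3) g1] sum_nxt[OF draws_le[OF Suc.prems(1-3) xs]] g' by simp
qed

lemma binom_lin: "p \<in> {0..1} \<Longrightarrow> real c \<le> a \<Longrightarrow>
   (\<integral>\<^sup>+x. ennreal (a - real x) \<partial>binomial_pmf c p) = ennreal (a - real c * p)"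
proof (induction c arbitrary: a)
  case 0
  then show ?case by (simp add: binomial_pmf_0)
next
  case (Suc c)
  have p: "0 \<le> p" "p \<le> 1" using Suc.prems by auto
  have e1: "(\<integral>\<^sup>+x. ennreal (a - real (1 + x)) \<partial>binomial_pmf c p) = ennreal ((a - 1) - real c * p)"
    using Suc.IH[of "a - 1"] Suc.prems by (simp add: algebra_simps)
  have e0: "(\<integral>\<^sup>+x. ennreal (a - real (0 + x)) \<partial>binomial_pmf c p) = ennreal (a - real c * p)"
    using Suc.IH[of "a"] Suc.prems by simp
  have nn1: "0 \<le> (a - 1) - real c * p" "0 \<le> a - real c * p" using Suc.prems p
    by (auto intro!: order.trans[OF mult_right_le_one_le[of "real c" p]] )
  have "(\<integral>\<^sup>+x. ennreal (a - real x) \<partial>binomial_pmf (Suc c) p) =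
     (\<integral>\<^sup>+x. ennreal (a - real (1 + x)) \<partial>binomial_pmf c p) * ennreal p +
     (\<integral>\<^sup>+x. ennreal (a - real (0 + x)) \<partial>binomial_pmf c p) * ennreal (1 - p)"
    using p by (simp add: binomial_pmf_Suc[OF Suc.prems(1)])
  also have "\<dots> = ennreal (((a - 1) - real c * p) * p + (a - real c * p) * (1 - p))"
    unfolding e1 e0 using nn1 p by (simp add: ennreal_mult'')
  also have "((a - 1) - real c * p) * p + (a - real c * p) * (1 - p) = a - real (Suc c) * p"
    by (simp add: algebra_simps)
  finally show ?case .
qed


lemma nnI_const_pmf: "(\<integral>\<^sup>+x. c \<partial>measure_pmf M) = c"
  by (simp add: measure_pmf.emeasure_space_1)

lemma nnI_add_pmf: "(\<integral>\<^sup>+x. f x + g x \<partial>measure_pmf M) = (\<integral>\<^sup>+x. f x \<partial>measure_pmf M) + (\<integral>\<^sup>+x. g x \<partial>measure_pmf M)"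
  by (rule nn_integral_add) auto

lemma nnI_cmult_pmf: "(\<integral>\<^sup>+x. c * f x \<partial>measure_pmf M) = c * (\<integral>\<^sup>+x. f x \<partial>measure_pmf M)"
  by (rule nn_integral_cmult) auto

lemma nnI_mono_pmf: "(\<And>x. x \<in> set_pmf M \<Longrightarrow> f x \<le> g x) \<Longrightarrow> (\<integral>\<^sup>+x. f x \<partial>measure_pmf M) \<le> (\<integral>\<^sup>+x. g x \<partial>measure_pmf M)"
  by (rule nn_integral_mono_AE) (simp add: AE_measure_pmf_iff)

lemma nnI_cong_pmf: "(\<And>x. x \<in> set_pmf M \<Longrightarrow> f x = g x) \<Longrightarrow> (\<integral>\<^sup>+x. f x \<partial>measure_pmf M) = (\<integral>\<^sup>+x. g x \<partial>measure_pmf M)"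
  by (rule nn_integral_cong_AE) (simp add: AE_measure_pmf_iff)

lemma C1:
  assumes p: "0 \<le> p" "p \<le> 1" and q: "0 \<le> q" "q \<le> 1"
  shows "(\<integral>\<^sup>+xs. ennreal (real (sum_list (drop L (map2 (-) g xs)))) \<partial>bs_draws p q g)
     \<le> ennreal ((1 - p * q) * real (sum_list (drop L g)))"
proof (induction g arbitrary: L)
  case Nil
  then show ?case by simp
next
  case (Cons h g)
  define c where "c = nat \<lceil>q * real h\<rceil>"
  have pin: "p \<in> {0..1}" using p by simp
  have ch: "c \<le> h" unfolding c_def using c_le[OF q] .
  have qc: "q * real h \<le> real c" unfolding c_def by linarith
  have pq1: "0 \<le> 1 - p * q" using p q by (simp add: mult_le_one)
  show ?case
  proof (cases L)
    case 0
    define I where "I = (\<integral>\<^sup>+xs. ennreal (real (sum_list (map2 (-) g xs))) \<partial>bs_draws p q g)"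
    have "(\<integral>\<^sup>+xs. ennreal (real (sum_list (drop L (map2 (-) (h#g) xs)))) \<partial>bs_draws p q (h#g))
       = (\<integral>\<^sup>+x. (\<integral>\<^sup>+xs. ennreal (real (h - x)) + ennreal (real (sum_list (map2 (-) g xs))) \<partial>bs_draws p q g) \<partial>binomial_pmf c p)"
      unfolding 0 draws_cons c_def by (simp add: map_pmf_def)
    also have "\<dots> = (\<integral>\<^sup>+x. ennreal (real (h - x)) + I \<partial>binomial_pmf c p)"
      by (simp add: nnI_add_pmf nnI_const_pmf I_def)
    also have "\<dots> = (\<integral>\<^sup>+x. ennreal (real h - real x) \<partial>binomial_pmf c p) + I"
      unfolding nnI_add_pmf nnI_const_pmf
      by (rule arg_cong[where f="\<lambda>u. u + I"], rule nnI_cong_pmf)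
         (metis of_nat_diff le_trans set_binom[OF pin] ch)
    also have "\<dots> = ennreal (real h - real c * p) + I"
      using binom_lin[OF pin, of c "real h"] ch by simp
    also have "\<dots> \<le> ennreal ((1 - p*q) * real h) + ennreal ((1 - p * q) * real (sum_list g))"
    proof (rule add_mono)
      have "real h - real c * p \<le> (1 - p*q) * real h"
        using mult_left_mono[OF qc p(1)] by (simp add: algebra_simps)
      then show "ennreal (real h - real c * p) \<le> ennreal ((1 - p*q) * real h)"
        by (rule ennreal_leI)
      show "I \<le> ennreal ((1 - p * q) * real (sum_list g))"
        using Cons.IH[of 0] unfolding I_def by simp
    qed
    also have "\<dots> = ennreal ((1 - p * q) * real (sum_list (drop L (h#g))))"
    proof -
      have "ennreal ((1 - p*q) * real h) + ennreal ((1 - p * q) * real (sum_list g)) =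
          ennreal ((1 - p*q) * real h + (1 - p * q) * real (sum_list g))"
        using pq1 by (intro ennreal_plus[symmetric]) auto
      then show ?thesis unfolding 0 by (simp add: algebra_simps)
    qed
    finally show ?thesis .
  next
    case (Suc L')
    have "(\<integral>\<^sup>+xs. ennreal (real (sum_list (drop L (map2 (-) (h#g) xs)))) \<partial>bs_draws p q (h#g))
       = (\<integral>\<^sup>+x. (\<integral>\<^sup>+xs. ennreal (real (sum_list (drop L' (map2 (-) g xs)))) \<partial>bs_draws p q g) \<partial>binomial_pmf c p)"
      unfolding Suc draws_cons c_def by (simp add: map_pmf_def)
    also have "\<dots> = (\<integral>\<^sup>+xs. ennreal (real (sum_list (drop L' (map2 (-) g xs)))) \<partial>bs_draws p q g)"
      by (rule nnI_const_pmf)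
    also have "\<dots> \<le> ennreal ((1 - p * q) * real (sum_list (drop L (h#g))))"
      using Cons.IH[of L'] Suc by simp
    finally show ?thesis .
  qed
qed


lemma C2:
  assumes p: "0 \<le> p" "p \<le> 1" and q: "0 \<le> q" "q \<le> 1"
  shows "L \<le> j \<Longrightarrow> (\<integral>\<^sup>+g'. ennreal (real (sum_list (drop L g'))) \<partial>cfg p q g j)
     \<le> ennreal ((1 - p * q) ^ L * real (sum_list g))"
proof (induction L arbitrary: j)
  case 0
  have "(\<integral>\<^sup>+g'. ennreal (real (sum_list (drop 0 g'))) \<partial>cfg p q g j) = (\<integral>\<^sup>+g'. ennreal (real (sum_list g)) \<partial>cfg p q g j)"
    by (rule nnI_cong_pmf) (use cfg_sum[of p q] p q in auto)
  then show ?case by (simp add: nnI_const_pmf)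
next
  case (Suc L)
  then obtain j' where j: "j = Suc j'" and L: "L \<le> j'" by (cases j) auto
  have pq1: "0 \<le> 1 - p * q" using p q by (simp add: mult_le_one)
  have "(\<integral>\<^sup>+g'. ennreal (real (sum_list (drop (Suc L) g'))) \<partial>cfg p q g j)
     = (\<integral>\<^sup>+g1. (\<integral>\<^sup>+xs. ennreal (real (sum_list (drop L (map2 (-) g1 xs)))) \<partial>bs_draws p q g1) \<partial>cfg p q g j')"
    unfolding j by (simp add: nxt_def)
  also have "\<dots> \<le> (\<integral>\<^sup>+g1. ennreal (1 - p * q) * ennreal (real (sum_list (drop L g1))) \<partial>cfg p q g j')"
    by (rule nnI_mono_pmf) (use C1[OF p q] pq1 in \<open>simp add: ennreal_mult\<close>)
  also have "\<dots> = ennreal (1 - p * q) * (\<integral>\<^sup>+g1. ennreal (real (sum_list (drop L g1))) \<partial>cfg p q g j')"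
    by (rule nnI_cmult_pmf)
  also have "\<dots> \<le> ennreal (1 - p * q) * ennreal ((1 - p * q) ^ L * real (sum_list g))"
    by (rule mult_left_mono[OF Suc.IH[OF L]]) simp
  also have "\<dots> = ennreal ((1 - p * q) ^ Suc L * real (sum_list g))"
    using pq1 by (simp add: ennreal_mult[symmetric])
  finally show ?case .
qed

lemma binom_mgf: "p \<in> {0..1} \<Longrightarrow>
   (\<integral>\<^sup>+x. ennreal (exp (t * real x)) \<partial>binomial_pmf c p) = ennreal ((1 - p + p * exp t) ^ c)"
proof (induction c)
  case 0
  then show ?case by (simp add: binomial_pmf_0)
next
  case (Suc c)
  have p: "0 \<le> p" "p \<le> 1" using Suc.prems by auto
  have b0: "0 \<le> 1 - p + p * exp t" using p by (simp add: add_nonneg_nonneg)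
  have e1: "(\<integral>\<^sup>+x. ennreal (exp (t * real (1 + x))) \<partial>binomial_pmf c p) = ennreal (exp t) * ennreal ((1 - p + p * exp t) ^ c)"
  proof -
    have "(\<integral>\<^sup>+x. ennreal (exp (t * real (1 + x))) \<partial>binomial_pmf c p) = 
       (\<integral>\<^sup>+x. ennreal (exp t) * ennreal (exp (t * real x)) \<partial>binomial_pmf c p)"
      by (simp add: ennreal_mult[symmetric] exp_add[symmetric] algebra_simps)
    then show ?thesis by (simp add: nnI_cmult_pmf Suc.IH[OF Suc.prems])
  qed
  have "(\<integral>\<^sup>+x. ennreal (exp (t * real x)) \<partial>binomial_pmf (Suc c) p) =
     (\<integral>\<^sup>+x. ennreal (exp (t * real (1 + x))) \<partial>binomial_pmf c p) * ennreal p +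
     (\<integral>\<^sup>+x. ennreal (exp (t * real (0 + x))) \<partial>binomial_pmf c p) * ennreal (1 - p)"
    using p by (simp add: binomial_pmf_Suc[OF Suc.prems(1)])
  also have "\<dots> = ennreal ((exp t * (1 - p + p * exp t) ^ c) * p + (1 - p + p * exp t) ^ c * (1 - p))"
    unfolding e1 using Suc.IH[OF Suc.prems] p b0 by (simp add: ennreal_mult'' ennreal_mult)
  also have "(exp t * (1 - p + p * exp t) ^ c) * p + (1 - p + p * exp t) ^ c * (1 - p) = (1 - p + p * exp t) ^ Suc c"
    by (simp add: algebra_simps)
  finally show ?case .
qed

definition Cs :: "real \<Rightarrow> nat list \<Rightarrow> nat" where
  "Cs q g = sum_list (map (\<lambda>h. nat \<lceil>q * real h\<rceil>) g)"

lemma draws_mgf: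
  assumes p: "0 \<le> p" "p \<le> 1"
  shows "(\<integral>\<^sup>+xs. ennreal (exp (t * real (sum_list xs))) \<partial>bs_draws p q g)
     \<le> ennreal (exp ((exp t - 1) * p * real (Cs q g)))"
proof (induction g)
  case Nil
  then show ?case by (simp add: Cs_def)
next
  case (Cons h g)
  define c where "c = nat \<lceil>q * real h\<rceil>"
  have pin: "p \<in> {0..1}" using p by simp
  define I where "I = (\<integral>\<^sup>+xs. ennreal (exp (t * real (sum_list xs))) \<partial>bs_draws p q g)"
  have b0: "0 \<le> 1 - p + p * exp t" using p by (simp add: add_nonneg_nonneg)
  have "(\<integral>\<^sup>+xs. ennreal (exp (t * real (sum_list xs))) \<partial>bs_draws p q (h#g))
    = (\<integral>\<^sup>+x. (\<integral>\<^sup>+xs. ennreal (exp (t * real x)) * ennreal (exp (t * real (sum_list xs))) \<partial>bs_draws p q g) \<partial>binomial_pmf c p)"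
    unfolding draws_cons c_def by (simp add: map_pmf_def ennreal_mult[symmetric] exp_add[symmetric] algebra_simps)
  also have "\<dots> = (\<integral>\<^sup>+x. ennreal (exp (t * real x)) * I \<partial>binomial_pmf c p)"
    unfolding nnI_cmult_pmf I_def ..
  also have "\<dots> = ennreal ((1 - p + p * exp t) ^ c) * I"
    by (simp add: nn_integral_multc binom_mgf[OF pin])
  also have "\<dots> \<le> ennreal (exp ((exp t - 1) * p * real c)) * ennreal (exp ((exp t - 1) * p * real (Cs q g)))"
  proof (rule mult_mono)
    have "(1 - p + p * exp t) ^ c \<le> exp (p * (exp t - 1)) ^ c"
      by (rule power_mono) (use b0 exp_ge_add_one_self[of "p * (exp t - 1)"] in \<open>auto simp: algebra_simps\<close>)
    also have "\<dots> = exp ((exp t - 1) * p * real c)"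
      by (simp add: exp_of_nat_mult[symmetric] algebra_simps)
    finally show "ennreal ((1 - p + p * exp t) ^ c) \<le> ennreal (exp ((exp t - 1) * p * real c))"
      by (rule ennreal_leI)
    show "I \<le> ennreal (exp ((exp t - 1) * p * real (Cs q g)))" using Cons.IH unfolding I_def .
  qed auto
  also have "\<dots> = ennreal (exp ((exp t - 1) * p * real (Cs q (h#g))))"
    by (simp add: ennreal_mult[symmetric] exp_add[symmetric] Cs_def c_def algebra_simps)
  finally show ?case .
qed


lemma mgf_shift:
  assumes p: "0 \<le> p" "p \<le> 1"
  shows "(\<integral>\<^sup>+xs. ennreal (exp (t * (real (sum_list xs) - a))) \<partial>bs_draws p q g)
     \<le> ennreal (exp ((exp t - 1) * (p * real (Cs q g)) - t * a))"
proof -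
  have "(\<integral>\<^sup>+xs. ennreal (exp (t * (real (sum_list xs) - a))) \<partial>bs_draws p q g)
     = (\<integral>\<^sup>+xs. ennreal (exp (- t * a)) * ennreal (exp (t * real (sum_list xs))) \<partial>bs_draws p q g)"
    by (simp add: ennreal_mult[symmetric] exp_add[symmetric] algebra_simps)
  also have "\<dots> = ennreal (exp (- t * a)) * (\<integral>\<^sup>+xs. ennreal (exp (t * real (sum_list xs))) \<partial>bs_draws p q g)"
    by (rule nnI_cmult_pmf)
  also have "\<dots> \<le> ennreal (exp (- t * a)) * ennreal (exp ((exp t - 1) * p * real (Cs q g)))"
    by (rule mult_left_mono[OF draws_mgf[OF p]]) simp
  also have "\<dots> = ennreal (exp ((exp t - 1) * (p * real (Cs q g)) - t * a))"
    by (simp add: ennreal_mult[symmetric] exp_add[symmetric] algebra_simps)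
  finally show ?thesis .
qed

lemma exp_neg_bound:
  fixes t :: real assumes "0 \<le> t" "t \<le> 1"
  shows "exp (- t) \<le> 1 - t + t\<^sup>2"
proof -
  have "exp (-t) = 1 / exp t" by (simp add: exp_minus field_simps)
  also have "\<dots> \<le> 1 / (1 + t)"
    using assms exp_ge_add_one_self[of t] by (intro divide_left_mono) auto
  also have "\<dots> \<le> 1 - t + t\<^sup>2"
  proof -
    have "1 \<le> (1 - t + t\<^sup>2) * (1 + t)" using assms by (simp add: algebra_simps power2_eq_square power3_eq_cube)
    then show ?thesis using assms by (simp add: divide_le_eq)
  qed
  finally show ?thesis .
qed

lemma chern:
  assumes p: "0 \<le> p" "p \<le> 1" and d: "0 < d" "d \<le> 1" and mu: "mu = p * real (Cs q g)"
  shows "emeasure (measure_pmf (bs_draws p q g)) {xs. d * mu \<le> \<bar>real (sum_list xs) - mu\<bar>}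
     \<le> ennreal (2 * exp (- (mu * d\<^sup>2 / 4)))"
proof -
  define t where "t = d / 2"
  have t: "0 \<le> t" "t \<le> 1" using d by (auto simp: t_def)
  have mu0: "0 \<le> mu" using p mu by simp
  define A where "A = {xs. d * mu \<le> \<bar>real (sum_list xs) - mu\<bar>}"
  have "emeasure (measure_pmf (bs_draws p q g)) A = (\<integral>\<^sup>+xs. indicator A xs \<partial>bs_draws p q g)"
    by simp
  also have "\<dots> \<le> (\<integral>\<^sup>+xs. ennreal (exp (t * (real (sum_list xs) - (1 + d) * mu))) +
       ennreal (exp ((- t) * (real (sum_list xs) - (1 - d) * mu))) \<partial>bs_draws p q g)"
  proof (rule nnI_mono_pmf)
    fix xs
    show "indicator A xs \<le> ennreal (exp (t * (real (sum_list xs) - (1 + d) * mu))) +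
       ennreal (exp ((- t) * (real (sum_list xs) - (1 - d) * mu)))"
    proof (cases "xs \<in> A")
      case True
      then have "d * mu \<le> real (sum_list xs) - mu \<or> d * mu \<le> mu - real (sum_list xs)"
        unfolding A_def by auto
      then show ?thesis
      proof
        assume h: "d * mu \<le> real (sum_list xs) - mu"
        have "0 \<le> t * (real (sum_list xs) - (1 + d) * mu)" using h t by (intro mult_nonneg_nonneg) (auto simp: algebra_simps)
        then have "1 \<le> ennreal (exp (t * (real (sum_list xs) - (1 + d) * mu)))" by (simp add: ennreal_leI[of 1, simplified])
        then show ?thesis using True by (simp add: add_increasing2)
      next
        assume h: "d * mu \<le> mu - real (sum_list xs)"
        have "0 \<le> t * ((1 - d) * mu - real (sum_list xs))" using h t
          by (intro mult_nonneg_nonneg) (auto simp: algebra_simps)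
        then have "0 \<le> (- t) * (real (sum_list xs) - (1 - d) * mu)" by (simp add: algebra_simps)
        then have "1 \<le> ennreal (exp ((- t) * (real (sum_list xs) - (1 - d) * mu)))" by (simp add: ennreal_leI[of 1, simplified])
        then show ?thesis using True by (simp add: add_increasing)
      qed
    qed (simp)
  qed
  also have "\<dots> = (\<integral>\<^sup>+xs. ennreal (exp (t * (real (sum_list xs) - (1 + d) * mu))) \<partial>bs_draws p q g) +
       (\<integral>\<^sup>+xs. ennreal (exp ((- t) * (real (sum_list xs) - (1 - d) * mu))) \<partial>bs_draws p q g)"
    by (rule nnI_add_pmf)
  also have "\<dots> \<le> ennreal (exp ((exp t - 1) * mu - t * ((1 + d) * mu))) + ennreal (exp ((exp (- t) - 1) * mu - (- t) * ((1 - d) * mu)))"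
    by (rule add_mono; unfold mu; rule mgf_shift[OF p])
  also have "\<dots> \<le> ennreal (exp (- (mu * d\<^sup>2 / 4))) + ennreal (exp (- (mu * d\<^sup>2 / 4)))"
  proof (rule add_mono; rule ennreal_leI; subst exp_le_cancel_iff)
    have "exp t - 1 \<le> t + t\<^sup>2" using exp_bound[OF t] by simp
    then have "(exp t - 1) * mu \<le> (t + t\<^sup>2) * mu" by (rule mult_right_mono) (rule mu0)
    moreover have "(t + t\<^sup>2) * mu - t * ((1 + d) * mu) = - (mu * d\<^sup>2 / 4)"
      by (simp add: t_def power2_eq_square field_simps)
    ultimately show "(exp t - 1) * mu - t * ((1 + d) * mu) \<le> - (mu * d\<^sup>2 / 4)"
      by linarith
    have "exp (-t) - 1 \<le> - t + t\<^sup>2" using exp_neg_bound[OF t] by simp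
    then have "(exp (-t) - 1) * mu \<le> (- t + t\<^sup>2) * mu" by (rule mult_right_mono) (rule mu0)
    moreover have "(- t + t\<^sup>2) * mu - (- t) * ((1 - d) * mu) = - (mu * d\<^sup>2 / 4)"
      by (simp add: t_def power2_eq_square field_simps)
    ultimately show "(exp (- t) - 1) * mu - (- t) * ((1 - d) * mu) \<le> - (mu * d\<^sup>2 / 4)"
      by linarith
  qed
  also have "\<dots> = ennreal (2 * exp (- (mu * d\<^sup>2 / 4)))"
    by (simp add: ennreal_plus[symmetric] del: ennreal_plus)
  finally show ?thesis unfolding A_def .
qed


lemma Cs_app: "Cs q (a @ b) = Cs q a + Cs q b" by (simp add: Cs_def)

lemma Cs_ge: "0 \<le> q \<Longrightarrow> q * real (sum_list g) \<le> real (Cs q g)"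
proof (induction g)
  case Nil then show ?case by (simp add: Cs_def)
next
  case (Cons h g)
  have "q * real h \<le> real (nat \<lceil>q * real h\<rceil>)" by linarith
  then show ?case using Cons le_of_int_ceiling[of "q * real h"] by (simp add: Cs_def algebra_simps; linarith)
qed

lemma Cs_le: "0 \<le> q \<Longrightarrow> real (Cs q g) \<le> q * real (sum_list g) + real (length g)"
proof (induction g)
  case Nil then show ?case by (simp add: Cs_def)
next
  case (Cons h g)
  have "real (nat \<lceil>q * real h\<rceil>) \<le> q * real h + 1" using Cons.prems by (simp add: of_nat_nat)
  then show ?case using Cons by (simp add: Cs_def algebra_simps)
qed

lemma Cs_zero: "sum_list g = 0 \<Longrightarrow> Cs q g = 0"
  by (induction g) (auto simp: Cs_def)

lemma step_bound:
  assumes p: "0 \<le> p" "p \<le> 1" and q: "0 \<le> q" "q \<le> 1" and d: "0 < d" "d \<le> 1"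
    and N: "sum_list g0 = N" and j: "D \<le> j" "j < m" and R: "R = p * q * real N" "0 < R"
    and cond: "p * real D \<le> d * R" and eps: "4 * d \<le> e"
  shows "measure_pmf.prob (np2 p q g0 m) {ss. \<bar>real (ss ! j) - R\<bar> / R > e}
     \<le> (1 - p * q) ^ D * real N + 2 * exp (- (R * d\<^sup>2 / 4))"
proof -
  have pin: "p \<in> {0..1}" using p by simp
  define Ev where "Ev = {s::nat. \<bar>real s - R\<bar> / R > e}"
  define B where "B = 2 * exp (- (R * d\<^sup>2 / 4))"
  have pq1: "0 \<le> 1 - p * q" using p q by (simp add: mult_le_one)
  have "measure_pmf.prob (np2 p q g0 m) {ss. \<bar>real (ss ! j) - R\<bar> / R > e} =
        measure_pmf.prob (map_pmf (\<lambda>ss. ss ! j) (np2 p q g0 m)) Ev"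
    by (simp add: Ev_def vimage_def)
  also have "\<dots> = measure_pmf.prob (bind_pmf (cfg p q g0 j) (\<lambda>g'. map_pmf sum_list (bs_draws p q g'))) Ev"
    by (simp only: marg[OF j(2)])
  finally have eq: "measure_pmf.prob (np2 p q g0 m) {ss. \<bar>real (ss ! j) - R\<bar> / R > e} =
     measure_pmf.prob (bind_pmf (cfg p q g0 j) (\<lambda>g'. map_pmf sum_list (bs_draws p q g'))) Ev" .
  have pt: "emeasure (measure_pmf (map_pmf sum_list (bs_draws p q g'))) Ev
      \<le> ennreal (real (sum_list (drop D g'))) + ennreal B" if g': "g' \<in> set_pmf (cfg p q g0 j)" for g'
  proof (cases "sum_list (drop D g') = 0")
    case False
    then have "(1::real) \<le> real (sum_list (drop D g'))" by (cases "sum_list (drop D g')") auto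
    then have "1 \<le> ennreal (real (sum_list (drop D g')))" using ennreal_leI by fastforce
    moreover have "emeasure (measure_pmf (map_pmf sum_list (bs_draws p q g'))) Ev \<le> 1"
      by (rule measure_pmf.emeasure_le_1)
    ultimately show ?thesis by (meson add_increasing2 order.trans zero_le)
  next
    case True
    have sg: "sum_list g' = N" using cfg_sum[OF pin q g'] N by simp
    define mu where "mu = p * real (Cs q g')"
    have CsT: "Cs q g' = Cs q (take D g')"
      using Cs_app[of q "take D g'" "drop D g'"] Cs_zero[OF True, of q] by simp
    have tN: "sum_list (take D g') = N"
      using sg True by (metis add_0_right append_take_drop_id sum_list_append)
    have "real (Cs q g') \<le> q * real (sum_list (take D g')) + real (length (take D g'))"
      unfolding CsT by (rule Cs_le[OF q(1)])
    also have "\<dots> \<le> q * real N + real D" unfolding tN by simp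
    finally have Cb: "real (Cs q g') \<le> q * real N + real D" .
    have mu_le: "mu \<le> R + d * R" unfolding mu_def
      using mult_left_mono[OF Cb p(1)] cond R by (simp add: algebra_simps)
    have mu_ge: "R \<le> mu" unfolding mu_def R(1)
      using mult_left_mono[OF Cs_ge[OF q(1), of g'] p(1)] sg by (simp add: algebra_simps)
    have sub: "sum_list -` Ev \<subseteq> {xs. d * mu \<le> \<bar>real (sum_list xs) - mu\<bar>}"
    proof
      fix xs assume "xs \<in> sum_list -` Ev"
      then have "e * R < \<bar>real (sum_list xs) - R\<bar>" using R(2) by (simp add: Ev_def field_simps)
      moreover have "4 * d * R \<le> e * R" using eps R(2) by simp
      moreover have "d * mu \<le> 2 * d * R"
      proof -
        have "d * R \<le> R" using d R(2) by (simp add: mult_left_le_one_le)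
        then have "mu \<le> 2 * R" using mu_le by linarith
        then show ?thesis using d(1) by (simp add: mult_left_mono algebra_simps)
      qed
      moreover have "\<bar>real (sum_list xs) - R\<bar> \<le> \<bar>real (sum_list xs) - mu\<bar> + (mu - R)"
        using mu_ge by linarith
      moreover have "0 \<le> d * R" using d R(2) by simp
      ultimately show "xs \<in> {xs. d * mu \<le> \<bar>real (sum_list xs) - mu\<bar>}"
        using mu_le by simp
    qed
    have "emeasure (measure_pmf (map_pmf sum_list (bs_draws p q g'))) Ev
        = emeasure (measure_pmf (bs_draws p q g')) (sum_list -` Ev)" by simp
    also have "\<dots> \<le> emeasure (measure_pmf (bs_draws p q g')) {xs. d * mu \<le> \<bar>real (sum_list xs) - mu\<bar>}"
      by (rule emeasure_mono[OF sub]) simp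
    also have "\<dots> \<le> ennreal (2 * exp (- (mu * d\<^sup>2 / 4)))"
      by (rule chern[OF p d mu_def])
    also have "\<dots> \<le> ennreal B" unfolding B_def
      using mu_ge by (intro ennreal_leI) (simp add: mult_right_mono)
    finally show ?thesis by (simp add: add_increasing)
  qed
  have "emeasure (measure_pmf (bind_pmf (cfg p q g0 j) (\<lambda>g'. map_pmf sum_list (bs_draws p q g')))) Ev
     = (\<integral>\<^sup>+g'. emeasure (measure_pmf (map_pmf sum_list (bs_draws p q g'))) Ev \<partial>cfg p q g0 j)"
    by simp
  also have "\<dots> \<le> (\<integral>\<^sup>+g'. ennreal (real (sum_list (drop D g'))) + ennreal B \<partial>cfg p q g0 j)"
    by (rule nnI_mono_pmf) (rule pt)
  also have "\<dots> = (\<integral>\<^sup>+g'. ennreal (real (sum_list (drop D g'))) \<partial>cfg p q g0 j) + ennreal B"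
    by (simp add: nnI_add_pmf nnI_const_pmf)
  also have "\<dots> \<le> ennreal ((1 - p * q) ^ D * real (sum_list g0)) + ennreal B"
    by (rule add_right_mono, rule C2[OF p q j(1)])
  also have "\<dots> = ennreal ((1 - p * q) ^ D * real N + B)"
    using pq1 N by (simp add: B_def)
  finally have "ennreal (measure_pmf.prob (bind_pmf (cfg p q g0 j) (\<lambda>g'. map_pmf sum_list (bs_draws p q g'))) Ev)
     \<le> ennreal ((1 - p * q) ^ D * real N + B)"
    by (simp add: measure_pmf.emeasure_eq_measure)
  then have "measure_pmf.prob (bind_pmf (cfg p q g0 j) (\<lambda>g'. map_pmf sum_list (bs_draws p q g'))) Ev
     \<le> (1 - p * q) ^ D * real N + B"
  proof -
    have nn: "0 \<le> (1 - p * q) ^ D * real N + B" using pq1 by (simp add: B_def)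
    show ?thesis using ennreal_le_iff[OF nn] \<open>ennreal _ \<le> ennreal _\<close> by blast
  qed
  then show ?thesis unfolding eq B_def .
qed


lemma per_n:
  fixes P Q d e K :: real and N :: nat and al :: "nat list"
  assumes P: "0 < P" "P \<le> 1" and Q: "0 < Q" "Q \<le> 1"
    and N3: "3 \<le> N" and x: "K \<le> P * Q\<^sup>2 * real N / ln (real N)" and K: "K = 16 / d\<^sup>2"
    and d: "0 < d" "d \<le> 1/4" "4 * d \<le> e"
    and al: "sum_list al = N" "\<forall>h\<in>set al. 0 < h"
  shows "(let D = nat \<lceil>14 * ln (real N) / (P * Q)\<rceil>;
              M = nat \<lceil>(real N)\<^sup>2 / P\<rceil>
          in measure_pmf.prob (bs_newpiles P Q al (D + M))
               {ss. Max ((\<lambda>k. \<bar>real (ss ! (k - 1)) - P * Q * real N\<bar> / (P * Q * real N))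
                         ` {D + 1 .. D + M}) > e}) \<le> 6 / real N"
proof -
  define L where "L = ln (real N)"
  define r where "r = P * Q"
  define R where "R = P * Q * real N"
  define D where "D = nat \<lceil>14 * L / r\<rceil>"
  define M where "M = nat \<lceil>(real N)\<^sup>2 / P\<rceil>"
  define B where "B = (1 - P * Q) ^ D * real N + 2 * exp (- (R * d\<^sup>2 / 4))"
  define y where "y = P * Q\<^sup>2 * real N"
  have Nr: "3 \<le> real N" using N3 by simp
  have N0: "0 < real N" using Nr by simp
  have L1: "1 \<le> L"
  proof -
    have "exp 1 \<le> real N" using exp_le Nr by linarith
    then have "ln (exp 1) \<le> ln (real N)" using N3 by (subst ln_le_cancel_iff) auto
    then show ?thesis by (simp add: L_def)
  qed
  have r0: "0 < r" using P Q by (simp add: r_def)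
  have KL: "K * L \<le> y" using x L1 by (simp add: y_def L_def pos_le_divide_eq)
  have d2: "d\<^sup>2 \<le> 1/16"
  proof -
    have "d\<^sup>2 \<le> (1/4)\<^sup>2" using d by (intro power_mono) auto
    then show ?thesis by (simp add: power2_eq_square)
  qed
  have d20: "0 < d\<^sup>2" using d by simp
  have Kd: "K * d\<^sup>2 = 16" using d20 by (simp add: K)
  have K256: "256 \<le> K" unfolding K using d2 d20 by (simp add: pos_le_divide_eq)
  have dK: "32 \<le> (d/2) * K"
  proof -
    have "(d/2) * K = 8 / d" unfolding K using d by (simp add: power2_eq_square field_simps)
    also have "32 \<le> 8 / d" using d by (simp add: pos_le_divide_eq)
    ultimately show ?thesis by simp
  qed
  have yR: "y \<le> R"
  proof -
    have "Q\<^sup>2 \<le> Q" using Q by (simp add: power2_eq_square mult_left_le_one_le)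
    then show ?thesis unfolding y_def R_def using P N0 by (simp add: mult_left_mono mult_right_mono)
  qed
  have yQN: "y \<le> Q * real N"
  proof -
    have "P * Q\<^sup>2 \<le> Q" using P Q by (simp add: power2_eq_square mult_le_one mult_left_le_one_le)
    then show ?thesis unfolding y_def using N0 by (simp add: mult_right_mono)
  qed
  have yPN: "y \<le> P * real N"
  proof -
    have "P * Q\<^sup>2 \<le> P" using P Q by (simp add: power2_eq_square mult_le_one mult_left_le_one_le)
    then show ?thesis unfolding y_def using N0 by (simp add: mult_right_mono)
  qed
  have R0: "0 < R" unfolding R_def using P Q N0 by simp
  have D_ge: "14 * L / r \<le> real D" unfolding D_def by linarith
  have D_le: "real D \<le> 14 * L / r + 1"
  proof -
    have "0 \<le> 14 * L / r" using L1 r0 by simp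
    then show ?thesis unfolding D_def by linarith
  qed
  have cond: "P * real D \<le> d * R"
  proof -
    have "P * real D \<le> P * (14 * L / r + 1)" using D_le P by (simp add: mult_left_mono)
    also have "\<dots> = 14 * L / Q + P" using P Q by (simp add: r_def field_simps)
    also have "\<dots> \<le> (d/2) * R + (d/2) * R"
    proof (rule add_mono)
      have "14 * L \<le> (d/2) * K * L" using dK L1 by (simp add: mult_right_mono)
      also have "\<dots> \<le> (d/2) * y" using KL d by (simp add: mult_left_mono mult.assoc)
      also have "\<dots> = (d/2) * R * Q" unfolding y_def R_def by (simp add: power2_eq_square algebra_simps)
      finally show "14 * L / Q \<le> (d/2) * R" using Q by (simp add: divide_le_eq)
      have "(d/2) * K * 1 \<le> (d/2) * K * L" by (rule mult_left_mono) (use L1 dK in auto)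
      then have "1 \<le> (d/2) * K * L" using dK by linarith
      also have "\<dots> \<le> (d/2) * y" using KL d by (simp add: mult_left_mono mult.assoc)
      also have "\<dots> \<le> (d/2) * (Q * real N)" using yQN d by simp
      finally have "P * 1 \<le> P * ((d/2) * (Q * real N))" using P by (simp add: mult_left_mono)
      then show "P \<le> (d/2) * R" unfolding R_def by (simp add: algebra_simps)
    qed
    also have "\<dots> = d * R" by simp
    finally show ?thesis .
  qed
  have M1: "1 \<le> M"
  proof -
    have c: "0 < (real N)\<^sup>2 / P" using N0 P by simp
    then have "1 \<le> \<lceil>(real N)\<^sup>2 / P\<rceil>" by simp
    then show ?thesis unfolding M_def by linarith
  qed
  have M_le: "real M \<le> 2 * real N ^ 3"
  proof -
    have "K * 1 \<le> K * L" by (rule mult_left_mono) (use L1 K256 in auto)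
    then have PN: "1 \<le> P * real N" using KL K256 yPN by linarith
    have "real M \<le> (real N)\<^sup>2 / P + 1"
    proof -
      have "0 \<le> (real N)\<^sup>2 / P" using P by simp
      then show ?thesis unfolding M_def by linarith
    qed
    also have "(real N)\<^sup>2 / P \<le> real N ^ 3"
    proof -
      have "(real N)\<^sup>2 * 1 \<le> (real N)\<^sup>2 * (P * real N)" by (rule mult_left_mono) (use PN in auto)
      also have "\<dots> = real N ^ 3 * P" by (simp add: power2_eq_square power3_eq_cube)
      finally show ?thesis using P by (simp add: divide_le_eq)
    qed
    also have "1 \<le> real N ^ 3" using Nr by simp
    finally show ?thesis by simp
  qed
  have B_le: "B \<le> 3 / real N ^ 4"
  proof -
    have "(1 - r) ^ D \<le> exp (- r) ^ D"
      using exp_ge_add_one_self[of "- r"] P Q r0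
      by (intro power_mono) (simp_all add: r_def mult_le_one)
    also have "\<dots> = exp (- (r * real D))" by (simp add: exp_of_nat_mult[symmetric] algebra_simps)
    also have "\<dots> \<le> exp (- (14 * L))"
    proof -
      have "14 * L \<le> r * real D" using D_ge r0 by (simp add: divide_le_eq algebra_simps)
      then show ?thesis by simp
    qed
    also have "\<dots> = 1 / real N ^ 14"
    proof -
      have "exp (14 * L) = real N ^ 14" using exp_of_nat_mult[of 14 L] N0 by (simp add: L_def)
      then show ?thesis by (simp add: exp_minus inverse_eq_divide)
    qed
    finally have t1: "(1 - P * Q) ^ D \<le> 1 / real N ^ 14" by (simp add: r_def)
    have "exp (- (R * d\<^sup>2 / 4)) \<le> exp (- (4 * L))"
    proof -
      have "4 * L = K * L * d\<^sup>2 / 4" using Kd by simp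
      also have "\<dots> \<le> R * d\<^sup>2 / 4" using KL yR d20 by (simp add: divide_right_mono mult_right_mono)
      finally show ?thesis by simp
    qed
    also have "\<dots> = 1 / real N ^ 4"
    proof -
      have "exp (4 * L) = real N ^ 4" using exp_of_nat_mult[of 4 L] N0 by (simp add: L_def)
      then show ?thesis by (simp add: exp_minus inverse_eq_divide)
    qed
    finally have t2: "exp (- (R * d\<^sup>2 / 4)) \<le> 1 / real N ^ 4" .
    have "B \<le> 1 / real N ^ 14 * real N + 2 * (1 / real N ^ 4)"
      unfolding B_def using t1 t2 N0 by (intro add_mono mult_right_mono mult_left_mono) auto
    also have "1 / real N ^ 14 * real N \<le> 1 / real N ^ 4"
    proof -
      have a: "real N ^ 4 \<le> real N ^ 13" using Nr by (intro power_increasing) auto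
      have b: "real N ^ 13 * real N ^ 1 = real N ^ 14" by (subst power_add[symmetric]) simp
      have "1 / real N ^ 14 * real N = 1 / real N ^ 13" using N0 b[symmetric] by simp
      also have "\<dots> \<le> 1 / real N ^ 4" using a N0 by (intro divide_left_mono) auto
      finally show ?thesis .
    qed
    finally show ?thesis by simp
  qed
  have B0: "0 \<le> B" unfolding B_def using P Q by (simp add: mult_le_one)
  define A where "A = (\<lambda>k. {ss. \<bar>real (ss ! (k - 1)) - R\<bar> / R > e})"
  have fin: "finite {D + 1 .. D + M}" "{D + 1 .. D + M} \<noteq> {}" using M1 by auto
  have sub: "{ss. Max ((\<lambda>k. \<bar>real (ss ! (k - 1)) - R\<bar> / R) ` {D + 1 .. D + M}) > e}
      \<subseteq> (\<Union>k\<in>{D + 1 .. D + M}. A k)"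
    using fin by (auto simp: Max_gr_iff A_def)
  have np: "bs_newpiles P Q al (D + M) = np2 P Q al (D + M)"
    using A2[of P Q al "D + M"] al(2) P by (simp add: filter_id_conv)
  have "measure_pmf.prob (bs_newpiles P Q al (D + M))
       {ss. Max ((\<lambda>k. \<bar>real (ss ! (k - 1)) - R\<bar> / R) ` {D + 1 .. D + M}) > e}
     \<le> measure_pmf.prob (np2 P Q al (D + M)) (\<Union>k\<in>{D + 1 .. D + M}. A k)"
    unfolding np by (rule measure_pmf.finite_measure_mono[OF sub]) simp
  also have "\<dots> \<le> (\<Sum>k\<in>{D + 1 .. D + M}. measure_pmf.prob (np2 P Q al (D + M)) (A k))"
    by (rule measure_pmf.finite_measure_subadditive_finite) auto
  also have "\<dots> \<le> (\<Sum>k\<in>{D + 1 .. D + M}. B)"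
  proof (rule sum_mono)
    fix k assume k: "k \<in> {D + 1 .. D + M}"
    show "measure_pmf.prob (np2 P Q al (D + M)) (A k) \<le> B"
      unfolding A_def B_def
      by (rule step_bound[of P Q d al N D "k - 1" "D + M" R e])
         (use P Q d al k cond R0 in \<open>auto simp: R_def\<close>)
  qed
  also have "\<dots> = real M * B" by simp
  also have "\<dots> \<le> (2 * real N ^ 3) * (3 / real N ^ 4)"
    using M_le B_le B0 by (intro mult_mono) auto
  also have "\<dots> = 6 / real N"
  proof -
    have b: "real N ^ 3 * real N ^ 1 = real N ^ 4" by (subst power_add[symmetric]) simp
    show ?thesis using N0 b[symmetric] by simp
  qed
  finally show ?thesis
    unfolding Let_def D_def M_def L_def r_def R_def .
qed


lemma main_aux:
  fixes p q :: "nat \<Rightarrow> real" and \<alpha>0 :: "nat \<Rightarrow> nat list"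
  assumes pq: "\<And>n. 0 < p n \<and> p n \<le> 1 \<and> 0 < q n \<and> q n \<le> 1"
    and lim: "filterlim (\<lambda>n. p n * (q n)\<^sup>2 * real n / ln (real n)) at_top sequentially"
    and init: "\<And>n. sum_list (\<alpha>0 n) = n \<and> (\<forall>h\<in>set (\<alpha>0 n). 0 < h)"
    and eps: "\<epsilon> > 0"
  shows "(\<lambda>n. let D = nat \<lceil>14 * ln (real n) / (p n * q n)\<rceil>;
              M = nat \<lceil>(real n)\<^sup>2 / p n\<rceil>
          in measure_pmf.prob (bs_newpiles (p n) (q n) (\<alpha>0 n) (D + M))
               {ss. Max ((\<lambda>k. \<bar>real (ss ! (k - 1)) - p n * q n * real n\<bar> / (p n * q n * real n))
                         ` {D + 1 .. D + M}) > \<epsilon>})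
    \<longlonglongrightarrow> 0"
proof -
  define d where "d = min \<epsilon> 1 / 4"
  define K where "K = 16 / d\<^sup>2"
  have d: "0 < d" "d \<le> 1/4" "4 * d \<le> \<epsilon>" using eps by (auto simp: d_def)
  have ev: "eventually (\<lambda>n. 3 \<le> n \<and> K \<le> p n * (q n)\<^sup>2 * real n / ln (real n)) sequentially"
    using lim unfolding filterlim_at_top by (intro eventually_conj) (auto simp: eventually_ge_at_top)
  show ?thesis
  proof (rule tendsto_sandwich[of "\<lambda>_. 0" _ sequentially "\<lambda>n. 6 / real n"])
    show "\<forall>\<^sub>F n in sequentially. 0 \<le> (let D = nat \<lceil>14 * ln (real n) / (p n * q n)\<rceil>;
              M = nat \<lceil>(real n)\<^sup>2 / p n\<rceil>
          in measure_pmf.prob (bs_newpiles (p n) (q n) (\<alpha>0 n) (D + M))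
               {ss. Max ((\<lambda>k. \<bar>real (ss ! (k - 1)) - p n * q n * real n\<bar> / (p n * q n * real n))
                         ` {D + 1 .. D + M}) > \<epsilon>})"
      by (simp add: Let_def)
    show "\<forall>\<^sub>F n in sequentially. (let D = nat \<lceil>14 * ln (real n) / (p n * q n)\<rceil>;
              M = nat \<lceil>(real n)\<^sup>2 / p n\<rceil>
          in measure_pmf.prob (bs_newpiles (p n) (q n) (\<alpha>0 n) (D + M))
               {ss. Max ((\<lambda>k. \<bar>real (ss ! (k - 1)) - p n * q n * real n\<bar> / (p n * q n * real n))
                         ` {D + 1 .. D + M}) > \<epsilon>}) \<le> 6 / real n"
      using ev
    proof eventually_elim
      case (elim n)
      show ?case
        by (rule per_n[of "p n" "q n" n K d \<epsilon> "\<alpha>0 n"]) (use pq[of n] elim d init[of n] in \<open>auto simp: K_def\<close>)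
    qed
    show "(\<lambda>_. 0::real) \<longlonglongrightarrow> 0" by simp
    show "(\<lambda>n. 6 / real n) \<longlonglongrightarrow> 0" by (rule lim_const_over_n)
  qed
qed

theorem lemma6:
  fixes p q :: "nat \<Rightarrow> real" and \<alpha>0 :: "nat \<Rightarrow> nat list"
  assumes pq: "\<And>n. 0 < p n \<and> p n \<le> 1 \<and> 0 < q n \<and> q n \<le> 1"
    and lim: "filterlim (\<lambda>n. p n * (q n)\<^sup>2 * real n / ln (real n)) at_top sequentially"
    and init: "\<And>n. sum_list (\<alpha>0 n) = n \<and> (\<forall>h\<in>set (\<alpha>0 n). 0 < h)"
  shows "\<And>\<epsilon>::real. \<epsilon> > 0 \<Longrightarrow>
    (\<lambda>n. let D = nat \<lceil>14 * ln (real n) / (p n * q n)\<rceil>;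
              M = nat \<lceil>(real n)\<^sup>2 / p n\<rceil>
          in measure_pmf.prob (bs_newpiles (p n) (q n) (\<alpha>0 n) (D + M))
               {ss. Max ((\<lambda>k. \<bar>real (ss ! (k - 1)) - p n * q n * real n\<bar> / (p n * q n * real n))
                         ` {D + 1 .. D + M}) > \<epsilon>})
    \<longlonglongrightarrow> 0"
  by (rule main_aux[OF pq lim init])

end
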